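(* Let $M,N,K$ be symmetric homogeneous bi-variate means having symmetric asymptotic expansions with coefficients $(a^M_n)$, $(a^N_n)$, $(a^K_n)$. Suppose $K$ and $N$ are stable and $M$ is $(K,N)$-stabilized, i.e. $M(s,t)=K\big(N(s,M(s,t)),N(M(s,t),t)\big)$ for all $s,t>0$. Then $a^M_0=1$ and for $m\ge1$ $$a^M_m=\sum_{n=1}^ma^N_n\sum_{k=0}^{2m-2n}P[k,2n,\mathbf g^M]P[2m-2n-k,-2n+1,\mathbf h^M]+2\sum_{n=1}^ma^K_n\sum_{k=0}^{m-n}P[k,2n,\mathbf d]P[m-n-k,-2n+1,\mathbf s],$$ with $\mathbf d,\mathbf s$ defined by $d_m=-\frac12\sum_{n=0}^ma^N_n\sum_{k=0}^{2m+1-2n}P[k,2n,\mathbf g^M]P[2m+1-2n-k,-2n+1,\mathbf h^M]$ and $s_m=\frac12\sum_{n=0}^ma^N_n\sum_{k=0}^{2m-2n}P[k,2n,\mathbf g^M]P[2m-2n-k,-2n+1,\mathbf h^M]$. In particular $a^M_1=\frac12(a^K_1+a^N_1)$.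
   Context: A bi-variate mean is $M:(0,\infty)^2\to(0,\infty)$ with $\min(s,t)\le M(s,t)\le\max(s,t)$; symmetric and homogeneous (degree 1) as usual. $M$ is stable if $M(s,t)=M\big(M(s,M(s,t)),M(M(s,t),t)\big)$. For two nontrivial stable means $K,N$, a mean $M$ is $(K,N)$-stabilized if $M(s,t)=K\big(N(s,M(s,t)),N(M(s,t),t)\big)$ for all $s,t>0$. A mean has a symmetric asymptotic expansion with coefficients $(a_n)$ if for every fixed real $t$ and $N\ge0$, $M(x-t,x+t)=\sum_{n=0}^Na_nt^{2n}x^{-2n+1}+o(x^{-2N+1})$ as $x\to\infty$. For a sequence $\mathbf b$ with $b_0\ne0$, $r\in\mathbb R$: $P[0,r,\mathbf b]=b_0^r$, $P[n,r,\mathbf b]=\frac1{nb_0}\sum_{k=1}^n(k(1+r)-n)b_kP[n-k,r,\mathbf b]$ ($n\ge1$), i.e. the coefficient of $z^n$ in $(\sum_jb_jz^j)^r$. $\mathbf g^M=(1,a^M_1,0,a^M_2,0,\ldots)$ ($g_0=1$, $g_{2k-1}=a^M_k$, $g_{2k}=0$), $\mathbf h^M=(2,-1,a^M_1,0,a^M_2,0,\ldots)$ ($h_0=2$, $h_1=-1$, $h_{2k}=a^M_k$, $h_{2k+1}=0$), $k\ge1$. *)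

theory Defs
  imports "HOL-Analysis.Analysis" "HOL-Library.Landau_Symbols"
begin

text \<open>Bivariate means are functions real => real => real; only their values on
  (0,inf)^2 matter.\<close>

definition is_mean :: "(real \<Rightarrow> real \<Rightarrow> real) \<Rightarrow> bool" where
  "is_mean M \<longleftrightarrow> (\<forall>s>0. \<forall>t>0. min s t \<le> M s t \<and> M s t \<le> max s t)"

definition symmetric_mean :: "(real \<Rightarrow> real \<Rightarrow> real) \<Rightarrow> bool" where
  "symmetric_mean M \<longleftrightarrow> (\<forall>s>0. \<forall>t>0. M s t = M t s)"

definition homogeneous_mean :: "(real \<Rightarrow> real \<Rightarrow> real) \<Rightarrow> bool" where
  "homogeneous_mean M \<longleftrightarrow> (\<forall>l>0. \<forall>s>0. \<forall>t>0. M (l * s) (l * t) = l * M s t)"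

definition nontrivial_mean :: "(real \<Rightarrow> real \<Rightarrow> real) \<Rightarrow> bool" where
  "nontrivial_mean M \<longleftrightarrow> \<not> (\<forall>s>0. \<forall>t>0. M s t = s) \<and> \<not> (\<forall>s>0. \<forall>t>0. M s t = t)"

definition stable_mean :: "(real \<Rightarrow> real \<Rightarrow> real) \<Rightarrow> bool" where
  "stable_mean M \<longleftrightarrow> (\<forall>s>0. \<forall>t>0. M s t = M (M s (M s t)) (M (M s t) t))"

definition stabilized :: "(real \<Rightarrow> real \<Rightarrow> real) \<Rightarrow> (real \<Rightarrow> real \<Rightarrow> real) \<Rightarrow>
    (real \<Rightarrow> real \<Rightarrow> real) \<Rightarrow> bool" where
  "stabilized K N M \<longleftrightarrow>
     is_mean K \<and> is_mean N \<and> nontrivial_mean K \<and> nontrivial_mean N \<and>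
     stable_mean K \<and> stable_mean N \<and>
     (\<forall>s>0. \<forall>t>0. M s t = K (N s (M s t)) (N (M s t) t))"

definition has_sym_expansion :: "(real \<Rightarrow> real \<Rightarrow> real) \<Rightarrow> (nat \<Rightarrow> real) \<Rightarrow> bool" where
  "has_sym_expansion M a \<longleftrightarrow>
     (\<forall>t::real. \<forall>N::nat.
        (\<lambda>x. M (x - t) (x + t) - (\<Sum>n\<le>N. a n * t ^ (2 * n) * x powi (1 - 2 * int n)))
          \<in> o[at_top](\<lambda>x. x powi (1 - 2 * int N)))"

text \<open>P[n,r,b]: coefficient of z^n in (sum_j b_j z^j)^r, via the recursion.\<close>
fun P :: "nat \<Rightarrow> real \<Rightarrow> (nat \<Rightarrow> real) \<Rightarrow> real" where
  "P 0 r b = b 0 powr r"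
| "P (Suc m) r b =
     (1 / (real (Suc m) * b 0)) *
       (\<Sum>k\<in>{1..Suc m}. (real k * (1 + r) - real (Suc m)) * b k * P (Suc m - k) r b)"

definition gseq :: "(nat \<Rightarrow> real) \<Rightarrow> nat \<Rightarrow> real" where
  "gseq a k = (if k = 0 then 1 else if odd k then a ((k + 1) div 2) else 0)"

definition hseq :: "(nat \<Rightarrow> real) \<Rightarrow> nat \<Rightarrow> real" where
  "hseq a k = (if k = 0 then 2 else if k = 1 then -1 else if even k then a (k div 2) else 0)"

definition dseq :: "(nat \<Rightarrow> real) \<Rightarrow> (nat \<Rightarrow> real) \<Rightarrow> nat \<Rightarrow> real" where
  "dseq aM aN m = - (1/2) * (\<Sum>n=0..m. aN n *
      (\<Sum>k=0..2*m+1-2*n. P k (2 * real n) (gseq aM) *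
                          P (2*m+1-2*n-k) (1 - 2 * real n) (hseq aM)))"

definition sseq :: "(nat \<Rightarrow> real) \<Rightarrow> (nat \<Rightarrow> real) \<Rightarrow> nat \<Rightarrow> real" where
  "sseq aM aN m = (1/2) * (\<Sum>n=0..m. aN n *
      (\<Sum>k=0..2*m-2*n. P k (2 * real n) (gseq aM) *
                        P (2*m-2*n-k) (1 - 2 * real n) (hseq aM)))"

end

theory Submission
  imports Defs "HOL-Computational_Algebra.Formal_Power_Series" "HOL-Computational_Algebra.Polynomial"
begin
unbundle no vec_syntax
notation fps_nth (infixl \<open>$\<close> 75)

lemma miller:
  fixes b :: "nat \<Rightarrow> real" and F :: "real fps" and r :: real
  assumes b0: "b 0 \<noteq> 0" and F0: "F$0 = b 0 powr r"
   and D: "Abs_fps b * fps_deriv F = fps_const r * fps_deriv (Abs_fps b) * F"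
  shows "P n r b = F$n"
proof (induction n rule: less_induct)
  case (less n)
  show ?case
  proof (cases n)
    case 0 thus ?thesis using F0 by simp
  next
    case (Suc m)
    have e: "(Abs_fps b * fps_deriv F)$m = (fps_const r * fps_deriv (Abs_fps b) * F)$m" using D by simp
    have L: "(Abs_fps b * fps_deriv F)$m = b 0 * real n * F$n + (\<Sum>k=1..n. b k * real (n-k) * F$(n-k))"
    proof -
      have "(Abs_fps b * fps_deriv F)$m = (\<Sum>i=0..m. b i * (real (m - i + 1) * F$(m-i+1)))"
        by (simp add: fps_mult_nth)
      also have "\<dots> = b 0 * real n * F$n + (\<Sum>i=1..m. b i * (real (m - i + 1) * F$(m-i+1)))"
        by (simp add: sum.atLeast_Suc_atMost Suc)
      also have "(\<Sum>i=1..m. b i * (real (m - i + 1) * F$(m-i+1))) = (\<Sum>k=1..m. b k * real (n-k) * F$(n-k))"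
        by (rule sum.cong) (auto simp: Suc Suc_diff_le)
      also have "\<dots> = (\<Sum>k=1..n. b k * real (n-k) * F$(n-k))"
        by (simp add: Suc)
      finally show ?thesis .
    qed
    have R: "(fps_const r * fps_deriv (Abs_fps b) * F)$m = (\<Sum>k=1..n. r * real k * b k * F$(n-k))"
    proof -
      have "(fps_const r * fps_deriv (Abs_fps b) * F)$m = (\<Sum>i=0..m. r * (real (i+1) * b (i+1)) * F$(m-i))"
        unfolding mult.assoc fps_mult_left_const_nth by (simp add: fps_mult_nth sum_distrib_left mult.assoc)
      also have "\<dots> = (\<Sum>k=Suc 0..Suc m. r * real k * b k * F$(Suc m-k))"
        by (subst sum.shift_bounds_cl_Suc_ivl) (simp add: mult.assoc)
      finally show ?thesis by (simp add: Suc)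
    qed
    have key: "real n * b 0 * F$n = (\<Sum>k=1..n. (real k * (1 + r) - real n) * b k * F$(n-k))"
    proof -
      have "real n * b 0 * F$n = (\<Sum>k=1..n. r * real k * b k * F$(n-k)) - (\<Sum>k=1..n. b k * real (n-k) * F$(n-k))"
        using e L R by (simp only: mult.commute[of "real n" "b 0"])
      also have "\<dots> = (\<Sum>k=1..n. (real k * (1 + r) - real n) * b k * F$(n-k))"
        unfolding sum_subtractf[symmetric] by (rule sum.cong) (auto simp: of_nat_diff algebra_simps)
      finally show ?thesis .
    qed
    have IH: "\<And>k. k \<in> {1..n} \<Longrightarrow> P (n-k) r b = F$(n-k)"
      using less Suc by auto
    have "P n r b = (1 / (real n * b 0)) * (\<Sum>k=1..n. (real k * (1 + r) - real n) * b k * F$(n-k))"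
      unfolding Suc P.simps unfolding Suc[symmetric] using IH by (intro arg_cong2[where f="(*)"] refl sum.cong) auto
    also have "\<dots> = F$n" proof -
      have "real n * b 0 \<noteq> 0" using b0 Suc by simp
      then show ?thesis unfolding key[symmetric] by simp
    qed
    finally show ?thesis .
  qed
qed
lemma P_pow:
  fixes b :: "nat \<Rightarrow> real"
  assumes b0: "b 0 > 0"
  shows "P n (2 * real k) b = (Abs_fps b ^ (2*k))$n"
proof (rule miller)
  show "b 0 \<noteq> 0" using b0 by simp
  show "(Abs_fps b ^ (2*k))$0 = b 0 powr (2 * real k)"
    using b0 powr_realpow[OF b0, of "2*k"] by (simp add: fps_nth_power_0)
  show "Abs_fps b * fps_deriv (Abs_fps b ^ (2 * k)) =
    fps_const (2 * real k) * fps_deriv (Abs_fps b) * Abs_fps b ^ (2 * k)"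
  proof (cases k)
    case 0 then show ?thesis by simp
  next
    case (Suc j)
    then have "Abs_fps b ^ (2*k) = Abs_fps b * Abs_fps b ^ (2*k - 1)"
      using Suc by (metis Suc_diff_1 power_Suc zero_less_Suc nat_0_less_mult_iff zero_less_numeral)
    then show ?thesis unfolding fps_deriv_power by (simp add: algebra_simps)
  qed
qed

lemma P_ipow:
  fixes b :: "nat \<Rightarrow> real"
  assumes b0: "b 0 > 0"
  shows "P n (1 - 2 * real k) b = (Abs_fps b * inverse (Abs_fps b) ^ (2*k))$n"
proof (rule miller)
  define B where "B = Abs_fps b"
  have B0: "B$0 \<noteq> 0" using b0 by (simp add: B_def)
  have I: "B * inverse B = 1" using B0 by (rule inverse_mult_eq_1')
  show "b 0 \<noteq> 0" using b0 by simp
  have "b 0 powr (1 - 2 * real k) = b 0 / b 0 ^ (2*k)"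
    using b0 powr_realpow[OF b0, of "2*k"] by (simp add: powr_diff)
  then show "(Abs_fps b * inverse (Abs_fps b) ^ (2*k))$0 = b 0 powr (1 - 2 * real k)"
    using b0 by (simp add: fps_nth_power_0 power_inverse divide_inverse)
  have "B * fps_deriv (B * inverse B ^ (2*k)) =
    fps_const (1 - 2 * real k) * fps_deriv B * (B * inverse B ^ (2*k))"
  proof (cases k)
    case 0 then show ?thesis by (simp add: mult.commute)
  next
    case (Suc j)
    define q where "q = 2*k"
    obtain p where p: "q = Suc p" using Suc q_def by auto
    have "fps_deriv (B * inverse B ^ q) = fps_deriv B * inverse B ^ q + B * (fps_const (of_nat q) * fps_deriv (inverse B) * inverse B ^ p)"
    proof -
      have "fps_deriv (inverse B ^ q) = fps_const (of_nat q) * fps_deriv (inverse B) * inverse B ^ p"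
        using fps_deriv_power[of "inverse B" q] p by simp
      then show ?thesis by (simp add: fps_deriv_mult)
    qed
    also have "\<dots> = fps_deriv B * inverse B ^ q - fps_const (of_nat q) * fps_deriv B * (B * inverse B) * inverse B * inverse B ^ p"
      using B0 by (simp add: fps_inverse_deriv power2_eq_square algebra_simps)
    also have "\<dots> = fps_deriv B * inverse B ^ q - fps_const (of_nat q) * fps_deriv B * inverse B ^ q"
      by (simp add: I p)
    finally have D: "fps_deriv (B * inverse B ^ q) = fps_deriv B * inverse B ^ q - fps_const (of_nat q) * fps_deriv B * inverse B ^ q" .
    have "B * fps_deriv (B * inverse B ^ q) = fps_deriv B * (B * inverse B ^ q) - fps_const (of_nat q) * fps_deriv B * (B * inverse B ^ q)"
      unfolding D by (simp add: algebra_simps)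
    also have "\<dots> = (1 - fps_const (of_nat q)) * fps_deriv B * (B * inverse B ^ q)"
      by (simp add: algebra_simps)
    also have "(1 - fps_const (of_nat q)) = (fps_const (1 - of_nat q) :: real fps)"
      by simp
    finally show ?thesis by (simp add: q_def)
  qed
  then show "Abs_fps b * fps_deriv (Abs_fps b * inverse (Abs_fps b) ^ (2*k)) =
    fps_const (1 - 2 * real k) * fps_deriv (Abs_fps b) * (Abs_fps b * inverse (Abs_fps b) ^ (2*k))"
    by (simp add: B_def)
qed


definition Rf :: "real fps \<Rightarrow> real fps" where
  "Rf F = Abs_fps (\<lambda>n. (-1)^n * F$n)"

lemma Rf_nth[simp]: "Rf F $ n = (-1)^n * F$n" by (simp add: Rf_def)

lemma Rf_mult: "Rf (F * G) = Rf F * Rf G"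
proof (rule fps_ext)
  fix n
  have "(Rf F * Rf G)$n = (\<Sum>i=0..n. (-1)^n * (F$i * G$(n-i)))"
    unfolding fps_mult_nth
  proof (rule sum.cong)
    fix i assume "i \<in> {0..n}"
    then have "(-1::real)^i * (-1)^(n-i) = (-1)^n" by (simp add: power_add[symmetric])
    then show "Rf F $ i * Rf G $ (n - i) = (-1)^n * (F$i * G$(n-i))"
      by (simp add: algebra_simps)
  qed simp
  then show "Rf (F * G) $ n = (Rf F * Rf G) $ n"
    by (simp add: fps_mult_nth sum_distrib_left)
qed

lemma Rf_add: "Rf (F + G) = Rf F + Rf G" by (rule fps_ext) (simp add: algebra_simps)
lemma Rf_diff: "Rf (F - G) = Rf F - Rf G" by (rule fps_ext) (simp add: algebra_simps)
lemma Rf_uminus: "Rf (- F) = - Rf F" by (rule fps_ext) (simp add: algebra_simps)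
lemma Rf_const: "Rf (fps_const c) = fps_const c" by (rule fps_ext) simp
lemma Rf_one: "Rf 1 = 1" by (rule fps_ext) simp
lemma Rf_X: "Rf fps_X = - fps_X" by (rule fps_ext) simp
lemma Rf_power: "Rf (F ^ k) = Rf F ^ k"
  by (induction k) (simp_all add: Rf_mult Rf_one)
lemma Rf_inverse:
  assumes "F$0 \<noteq> 0" shows "Rf (inverse F) = inverse (Rf F)"
proof -
  have "Rf F * Rf (inverse F) = 1"
    using assms by (simp add: Rf_mult[symmetric] inverse_mult_eq_1' Rf_one)
  then show ?thesis by (rule fps_inverse_unique[symmetric])
qed
lemma Rf_zero: "Rf 0 = 0" by (rule fps_ext) simp
lemma Rf_sum: "Rf (\<Sum>k\<in>A. f k) = (\<Sum>k\<in>A. Rf (f k))"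
  by (induction A rule: infinite_finite_induct) (simp_all add: Rf_add Rf_zero)

definition Ef :: "real fps \<Rightarrow> real fps" where
  "Ef F = Abs_fps (\<lambda>n. if even n then F$(n div 2) else 0)"

lemma Ef_nth[simp]: "Ef F $ n = (if even n then F$(n div 2) else 0)" by (simp add: Ef_def)

lemma sum_eo1: fixes p :: nat shows "(\<Sum>j=0..2*p+1. f j) = (\<Sum>a=0..p. f (2*a) + f (2*a+1))"
  by (induction p) (simp_all add: sum.atLeast0_atMost_Suc add_ac)

lemma sum_eo2: fixes p :: nat shows "(\<Sum>j=0..2*p. f j) = (\<Sum>a=0..p. f (2*a)) + (\<Sum>a<p. f (2*a+1))"
  by (induction p) (simp_all add: sum.atLeast0_atMost_Suc add_ac)

lemma Ef_mult: "Ef (F * G) = Ef F * Ef G"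
proof (rule fps_ext)
  fix n
  show "Ef (F * G) $ n = (Ef F * Ef G) $ n"
  proof (cases "even n")
    case True
    then obtain p where p: "n = 2*p" by auto
    have "(Ef F * Ef G) $ n = (\<Sum>a=0..p. Ef F$(2*a) * Ef G$(2*p - 2*a)) + (\<Sum>a<p. Ef F$(2*a+1) * Ef G$(2*p-(2*a+1)))"
      unfolding fps_mult_nth p sum_eo2 ..
    also have "(\<Sum>a<p. Ef F$(2*a+1) * Ef G$(2*p-(2*a+1))) = 0" by simp
    also have "(\<Sum>a=0..p. Ef F$(2*a) * Ef G$(2*p - 2*a)) = (\<Sum>a=0..p. F$a * G$(p-a))"
    proof (rule sum.cong)
      fix a assume "a \<in> {0..p}"
      then have "2*p - 2*a = 2*(p-a)" by simp
      then show "Ef F$(2*a) * Ef G$(2*p - 2*a) = F$a * G$(p-a)" by simp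
    qed simp
    finally show ?thesis by (simp add: p fps_mult_nth)
  next
    case False
    then obtain p where p: "n = 2*p+1" by (metis oddE)
    have "(Ef F * Ef G) $ n = (\<Sum>a=0..p. Ef F$(2*a) * Ef G$(2*p+1 - 2*a) + Ef F$(2*a+1) * Ef G$(2*p+1-(2*a+1)))"
      unfolding fps_mult_nth p sum_eo1 ..
    also have "\<dots> = 0"
    proof (rule sum.neutral, safe)
      fix a assume "a \<in> {0..p}"
      then have "odd (2*p+1 - 2*a)" by presburger
      then show "Ef F$(2*a) * Ef G$(2*p+1 - 2*a) + Ef F$(2*a+1) * Ef G$(2*p+1-(2*a+1)) = 0" by simp
    qed
    finally show ?thesis using False by simp
  qed
qed

lemma Ef_add: "Ef (F + G) = Ef F + Ef G" by (rule fps_ext) simp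
lemma Ef_diff: "Ef (F - G) = Ef F - Ef G" by (rule fps_ext) simp
lemma Ef_one: "Ef 1 = 1" by (rule fps_ext) (auto simp: elim: evenE)
lemma Ef_const: "Ef (fps_const c) = fps_const c" by (rule fps_ext) (auto elim: evenE)
lemma Ef_power: "Ef (F ^ k) = Ef F ^ k"
  by (induction k) (simp_all add: Ef_mult Ef_one)
lemma Ef_inverse:
  assumes "F$0 \<noteq> 0" shows "Ef (inverse F) = inverse (Ef F)"
proof -
  have "Ef F * Ef (inverse F) = 1"
    using assms by (simp add: Ef_mult[symmetric] inverse_mult_eq_1' Ef_one)
  then show ?thesis by (rule fps_inverse_unique[symmetric])
qed


abbreviation FR :: "real filter" where "FR \<equiv> at_right 0"

lemma ev_pos: "eventually (\<lambda>v::real. 0 < v) FR"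
  by (simp add: eventually_at_right_less)

lemma ev_small: "e > 0 \<Longrightarrow> eventually (\<lambda>v::real. 0 < v \<and> v < e) FR"
  using eventually_at_right_less[of 0] eventually_at_right[of 0 e]
  by (auto simp: eventually_at_right)

lemma pow_gt_small: "k > J \<Longrightarrow> (\<lambda>v::real. c * v^k) \<in> o[FR](\<lambda>v. v^J)"
proof (rule smalloI_tendsto)
  assume k: "k > J"
  have "((\<lambda>v::real. c * v^(k-J)) \<longlongrightarrow> c * 0^(k-J)) FR"
    by (intro tendsto_intros)
  moreover have "(0::real)^(k-J) = 0" using k by simp
  ultimately have "((\<lambda>v::real. c * v^(k-J)) \<longlongrightarrow> 0) FR" by simp
  moreover have "eventually (\<lambda>v::real. c * v^(k-J) = c * v^k / v^J) FR"
    using ev_pos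
  proof eventually_elim
    case (elim v)
    then have "v^k = v^(k-J) * v^J" using k by (simp add: power_add[symmetric])
    then show ?case using elim by simp
  qed
  ultimately show "((\<lambda>v::real. c * v^k / v^J) \<longlongrightarrow> 0) FR"
    using tendsto_cong by fastforce
  show "eventually (\<lambda>v::real. v^J \<noteq> 0) FR" using ev_pos by eventually_elim simp
qed

lemma sum_small:
  assumes "\<And>i. i \<le> J \<Longrightarrow> c i = 0"
  shows "(\<lambda>v::real. \<Sum>i\<le>D. c i * v^i) \<in> o[FR](\<lambda>v. v^J)"
proof (rule big_sum_in_smallo)
  fix i assume "i \<in> {..D}"
  show "(\<lambda>v::real. c i * v^i) \<in> o[FR](\<lambda>v. v^J)"
  proof (cases "i \<le> J")
    case True then show ?thesis using assms by simp
  next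
    case False then show ?thesis by (intro pow_gt_small) simp
  qed
qed

lemma poly_small:
  assumes "\<And>n. n \<le> J \<Longrightarrow> coeff p n = 0"
  shows "(\<lambda>v::real. poly p v) \<in> o[FR](\<lambda>v. v^J)"
  unfolding poly_altdef by (rule sum_small) (use assms in auto)

lemma tendsto_bigo1: "(f \<longlongrightarrow> c) FR \<Longrightarrow> (f :: real \<Rightarrow> real) \<in> O[FR](\<lambda>_. 1)"
  by (rule bigoI_tendsto[where c=c]) auto

lemma poly_bigo1: "(\<lambda>v::real. poly p v) \<in> O[FR](\<lambda>_. 1)"
  by (rule tendsto_bigo1) (rule tendsto_poly[OF tendsto_ident_at])

lemma powJ_bigo1: "(\<lambda>v::real. v^J) \<in> O[FR](\<lambda>_. 1)"
  by (rule tendsto_bigo1[where c="0^J"]) (intro tendsto_intros)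

lemma small_bigo1: "f \<in> o[FR](\<lambda>v::real. v^J) \<Longrightarrow> f \<in> O[FR](\<lambda>_. 1)"
  using landau_o.small_big_trans powJ_bigo1 landau_o.small_imp_big by blast

lemma small_mult_bigo1:
  "f \<in> o[FR](\<lambda>v::real. v^J) \<Longrightarrow> g \<in> O[FR](\<lambda>_. 1) \<Longrightarrow> (\<lambda>v. f v * g v) \<in> o[FR](\<lambda>v::real. v^J)"
  using landau_o.small_big_mult[of f FR "\<lambda>v. v^J" g "\<lambda>_. 1"] by simp

definition tp :: "nat \<Rightarrow> real fps \<Rightarrow> real poly" where
  "tp J F = (\<Sum>j\<le>J. monom (F$j) j)"

lemma poly_tp: "poly (tp J F) v = (\<Sum>j\<le>J. F$j * v^j)"
  by (simp add: tp_def poly_sum poly_monom)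

lemma coeff_tp: "coeff (tp J F) n = (if n \<le> J then F$n else 0)"
  by (simp add: tp_def coeff_sum)

definition approx :: "nat \<Rightarrow> (real \<Rightarrow> real) \<Rightarrow> real fps \<Rightarrow> bool" where
  "approx J f F \<longleftrightarrow> (\<lambda>v. f v - poly (tp J F) v) \<in> o[FR](\<lambda>v. v^J)"

lemma approx_cong_fps:
  assumes "approx J f F" "\<And>n. n \<le> J \<Longrightarrow> F$n = G$n"
  shows "approx J f G"
proof -
  have "tp J F = tp J G" unfolding tp_def using assms(2) by (intro sum.cong) auto
  then show ?thesis using assms(1) by (simp add: approx_def)
qed

lemma approx_cong_fun:
  assumes "approx J f F" "eventually (\<lambda>v. f v = g v) FR"
  shows "approx J g F"
proof -
  have ev: "eventually (\<lambda>v. f v - poly (tp J F) v = g v - poly (tp J F) v) FR"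
    using assms(2) by eventually_elim simp
  show ?thesis using assms(1) unfolding approx_def using landau_o.small.in_cong[OF ev] by simp
qed

lemma approx_small:
  assumes "approx J g F" "(\<lambda>v. f v - g v) \<in> o[FR](\<lambda>v. v^J)"
  shows "approx J f F"
proof -
  have "(\<lambda>v. (f v - g v) + (g v - poly (tp J F) v)) \<in> o[FR](\<lambda>v. v^J)"
    using assms(2) assms(1)[unfolded approx_def] by (rule sum_in_smallo)
  then show ?thesis by (simp add: approx_def)
qed

lemma approx_poly: "approx J (\<lambda>v. poly (tp J F) v) F"
  by (simp add: approx_def)

lemma approx_bigo1: "approx J f F \<Longrightarrow> f \<in> O[FR](\<lambda>_. 1)"
proof -
  assume "approx J f F"
  then have "(\<lambda>v. f v - poly (tp J F) v) \<in> O[FR](\<lambda>_. 1)" unfolding approx_def by (rule small_bigo1)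
  then have "(\<lambda>v. (f v - poly (tp J F) v) + poly (tp J F) v) \<in> O[FR](\<lambda>_. 1)"
    using poly_bigo1 by (rule sum_in_bigo)
  then show ?thesis by simp
qed

lemma approx_tendsto: "approx J f F \<Longrightarrow> (f \<longlongrightarrow> F$0) FR"
proof -
  assume "approx J f F"
  then have "(\<lambda>v. f v - poly (tp J F) v) \<in> o[FR](\<lambda>_. 1)"
    unfolding approx_def using landau_o.small_big_trans powJ_bigo1 by blast
  then have "((\<lambda>v. f v - poly (tp J F) v) \<longlongrightarrow> 0) FR" using smalloD_tendsto by fastforce
  moreover have "((\<lambda>v. poly (tp J F) v) \<longlongrightarrow> poly (tp J F) 0) FR"
    by (rule tendsto_poly[OF tendsto_ident_at])
  ultimately have "((\<lambda>v. (f v - poly (tp J F) v) + poly (tp J F) v) \<longlongrightarrow> 0 + poly (tp J F) 0) FR"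
    by (rule tendsto_add)
  moreover have "poly (tp J F) 0 = F$0" by (simp add: poly_0_coeff_0 coeff_tp)
  ultimately show ?thesis by simp
qed

lemma approx_add: "approx J f F \<Longrightarrow> approx J g G \<Longrightarrow> approx J (\<lambda>v. f v + g v) (F + G)"
proof -
  assume a: "approx J f F" "approx J g G"
  have t: "tp J (F + G) = tp J F + tp J G" by (rule poly_eqI) (simp add: coeff_tp)
  have "(\<lambda>v. f v + g v - poly (tp J (F + G)) v) = (\<lambda>v. (f v - poly (tp J F) v) + (g v - poly (tp J G) v))"
    by (simp add: t fun_eq_iff)
  then show ?thesis using sum_in_smallo(1)[OF a[unfolded approx_def]]
    by (simp add: approx_def)
qed

lemma approx_diff: "approx J f F \<Longrightarrow> approx J g G \<Longrightarrow> approx J (\<lambda>v. f v - g v) (F - G)"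
proof -
  assume a: "approx J f F" "approx J g G"
  have t: "tp J (F - G) = tp J F - tp J G" by (rule poly_eqI) (simp add: coeff_tp)
  have "(\<lambda>v. f v - g v - poly (tp J (F - G)) v) = (\<lambda>v. (f v - poly (tp J F) v) - (g v - poly (tp J G) v))"
    by (simp add: t fun_eq_iff)
  then show ?thesis using sum_in_smallo(2)[OF a[unfolded approx_def]]
    by (simp add: approx_def)
qed

lemma tp_const: "tp J (fps_const c) = [:c:]"
  by (rule poly_eqI) (simp add: coeff_tp coeff_pCons split: nat.split)

lemma approx_const: "approx J (\<lambda>_. c) (fps_const c)"
  by (simp add: approx_def tp_const)

lemma tp_X: "J \<ge> 1 \<Longrightarrow> tp J fps_X = [:0, 1:]"
  by (rule poly_eqI) (auto simp: coeff_tp coeff_pCons split: nat.split)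

lemma approx_X: "approx J (\<lambda>v. v) fps_X"
proof (cases J)
  case 0
  have "(\<lambda>v::real. v) \<in> o[FR](\<lambda>v. 1)"
    by (rule smalloI_tendsto) (auto intro: tendsto_ident_at)
  then show ?thesis using 0 by (simp add: approx_def tp_def)
next
  case (Suc n) then show ?thesis by (simp add: approx_def tp_X)
qed

lemma approx_mult:
  assumes a: "approx J f F" and b: "approx J g G"
  shows "approx J (\<lambda>v. f v * g v) (F * G)"
proof -
  define p where "p = tp J F"
  define q where "q = tp J G"
  have e1: "(\<lambda>v. f v - poly p v) \<in> o[FR](\<lambda>v. v^J)" using a by (simp add: approx_def p_def)
  have e2: "(\<lambda>v. g v - poly q v) \<in> o[FR](\<lambda>v. v^J)" using b by (simp add: approx_def q_def)
  have t1: "(\<lambda>v. (f v - poly p v) * g v) \<in> o[FR](\<lambda>v. v^J)"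
    using e1 approx_bigo1[OF b] by (rule small_mult_bigo1)
  have t2: "(\<lambda>v. (g v - poly q v) * poly p v) \<in> o[FR](\<lambda>v. v^J)"
    using e2 poly_bigo1 by (rule small_mult_bigo1)
  have t3: "(\<lambda>v. poly (p * q - tp J (F * G)) v) \<in> o[FR](\<lambda>v. v^J)"
  proof (rule poly_small)
    fix n assume n: "n \<le> J"
    have "coeff (p * q) n = (\<Sum>i\<le>n. F$i * G$(n-i))"
      unfolding coeff_mult p_def q_def coeff_tp using n by (intro sum.cong) auto
    also have "\<dots> = (F * G)$n" by (simp add: fps_mult_nth atLeast0AtMost)
    finally show "coeff (p * q - tp J (F * G)) n = 0" using n by (simp add: coeff_tp)
  qed
  have "(\<lambda>v. (f v - poly p v) * g v + (g v - poly q v) * poly p v + poly (p * q - tp J (F * G)) v) \<in> o[FR](\<lambda>v. v^J)"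
    using t1 t2 t3 by (intro sum_in_smallo)
  then show ?thesis unfolding approx_def p_def[symmetric]
    by (simp add: algebra_simps)
qed

lemma approx_cmult: "approx J f F \<Longrightarrow> approx J (\<lambda>v. c * f v) (fps_const c * F)"
  using approx_mult[OF approx_const] by blast

lemma approx_power: "approx J f F \<Longrightarrow> approx J (\<lambda>v. f v ^ k) (F ^ k)"
proof (induction k)
  case 0 then show ?case using approx_const[of J 1] by simp
next
  case (Suc k) then show ?case using approx_mult[OF Suc.prems Suc.IH] by simp
qed

lemma approx_sum:
  "finite A \<Longrightarrow> (\<And>k. k \<in> A \<Longrightarrow> approx J (f k) (F k)) \<Longrightarrow> approx J (\<lambda>v. \<Sum>k\<in>A. f k v) (\<Sum>k\<in>A. F k)"
proof (induction A rule: finite_induct)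
  case empty then show ?case using approx_const[of J 0] by simp
next
  case (insert x A)
  then show ?case using approx_add[of J "f x" "F x" "\<lambda>v. \<Sum>k\<in>A. f k v" "\<Sum>k\<in>A. F k"] by simp
qed

lemma approx_inverse:
  assumes a: "approx J f F" and F0: "F$0 \<noteq> 0"
  shows "approx J (\<lambda>v. inverse (f v)) (inverse F)"
proof -
  define q where "q = tp J (inverse F)"
  have "approx J (\<lambda>v. f v * poly q v) (F * inverse F)"
    using a approx_poly unfolding q_def by (rule approx_mult)
  then have "approx J (\<lambda>v. f v * poly q v) 1" using F0 by (simp add: inverse_mult_eq_1')
  then have e: "(\<lambda>v. f v * poly q v - 1) \<in> o[FR](\<lambda>v. v^J)"
    using tp_const[of J 1] by (simp add: approx_def fps_const_1_eq_1[symmetric] del: fps_const_1_eq_1)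
  have lim: "((\<lambda>v. inverse (f v)) \<longlongrightarrow> inverse (F$0)) FR"
    using approx_tendsto[OF a] F0 by (intro tendsto_intros)
  have nz: "eventually (\<lambda>v. f v \<noteq> 0) FR"
    using approx_tendsto[OF a] F0 tendsto_imp_eventually_ne by blast
  have "(\<lambda>v. (f v * poly q v - 1) * (- inverse (f v))) \<in> o[FR](\<lambda>v. v^J)"
    using e tendsto_bigo1[OF tendsto_minus[OF lim]] by (rule small_mult_bigo1)
  moreover have ev: "eventually (\<lambda>v. (f v * poly q v - 1) * (- inverse (f v)) = inverse (f v) - poly q v) FR"
    using nz by eventually_elim (simp add: field_simps)
  ultimately have "(\<lambda>v. inverse (f v) - poly q v) \<in> o[FR](\<lambda>v. v^J)"
    using landau_o.small.in_cong[OF ev] by simp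
  then show ?thesis unfolding approx_def q_def .
qed


lemma mean_bounds:
  assumes "is_mean M" "0 < v" "v < 1"
  shows "1 - v \<le> M (1-v) (1+v) \<and> M (1-v) (1+v) \<le> 1 + v"
proof -
  have p: "1 - v > 0" "1 + v > 0" using assms by auto
  have "min (1-v) (1+v) \<le> M (1-v) (1+v) \<and> M (1-v) (1+v) \<le> max (1-v) (1+v)"
    using assms(1) p unfolding is_mean_def by blast
  then show ?thesis using assms by simp
qed

lemma mean_11: "is_mean M \<Longrightarrow> M 1 1 = 1"
  unfolding is_mean_def by (metis order_antisym max.idem min.idem zero_less_one)

lemma powi_aux: "(v::real) > 0 \<Longrightarrow> v * inverse v powi (1 - 2 * int k) = v^(2*k)"
proof -
  assume v: "v > 0"
  have "inverse v powi (1 - 2 * int k) = v powi (2 * int k - 1)"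
    by (simp add: power_int_inverse power_int_minus[symmetric])
  also have "\<dots> = v powi (2 * int k) / v" using v by (simp add: power_int_diff)
  also have "v powi (2 * int k) = v^(2*k)"
    by (metis of_nat_mult of_nat_numeral power_int_of_nat)
  finally show ?thesis using v by simp
qed

lemma exp_v:
  assumes "is_mean M" "homogeneous_mean M" "has_sym_expansion M a"
  shows "(\<lambda>v. M (1-v) (1+v) - (\<Sum>k\<le>K. a k * v^(2*k))) \<in> o[FR](\<lambda>v. v^(2*K))"
proof -
  define f where "f = (\<lambda>x. M (x - 1) (x + 1) - (\<Sum>n\<le>K. a n * 1 ^ (2 * n) * x powi (1 - 2 * int n)))"
  have "f \<in> o[at_top](\<lambda>x. x powi (1 - 2 * int K))"
    using assms(3) unfolding has_sym_expansion_def f_def by blast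
  then have "(\<lambda>v. f (inverse v)) \<in> o[FR](\<lambda>v. inverse v powi (1 - 2 * int K))"
    by (rule landau_o.small.compose[OF _ filterlim_inverse_at_top_right])
  then have 1: "(\<lambda>v. v * f (inverse v)) \<in> o[FR](\<lambda>v. v * inverse v powi (1 - 2 * int K))"
    by (rule landau_o.small.mult_left)
  have ev1: "eventually (\<lambda>v. v * inverse v powi (1 - 2 * int K) = v^(2*K)) FR"
    using ev_pos by eventually_elim (rule powi_aux)
  have ev2: "eventually (\<lambda>v. v * f (inverse v) = M (1-v) (1+v) - (\<Sum>k\<le>K. a k * v^(2*k))) FR"
    using ev_small[OF zero_less_one]
  proof eventually_elim
    case (elim v)
    then have v: "0 < v" "v < 1" by auto
    have h: "v * M (inverse v - 1) (inverse v + 1) = M (1-v) (1+v)"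
    proof -
      have "M (v * (inverse v - 1)) (v * (inverse v + 1)) = v * M (inverse v - 1) (inverse v + 1)"
      proof -
        have "inverse v - 1 > 0" "inverse v + 1 > 0" using v by (auto simp: field_simps)
        then show ?thesis using assms(2) v unfolding homogeneous_mean_def by blast
      qed
      moreover have "v * (inverse v - 1) = 1 - v" "v * (inverse v + 1) = 1 + v" using v by (auto simp: field_simps)
      ultimately show ?thesis by simp
    qed
    have s: "v * (\<Sum>n\<le>K. a n * 1 ^ (2 * n) * inverse v powi (1 - 2 * int n)) = (\<Sum>k\<le>K. a k * v^(2*k))"
      unfolding sum_distrib_left by (intro sum.cong refl) (use powi_aux[OF v(1)] in \<open>simp add: algebra_simps\<close>)
    show ?case unfolding f_def using h s by (simp add: right_diff_distrib)
  qed
  from 1 have "(\<lambda>v. M (1-v) (1+v) - (\<Sum>k\<le>K. a k * v^(2*k))) \<in> o[FR](\<lambda>v. v * inverse v powi (1 - 2 * int K))"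
    using landau_o.small.in_cong[OF ev2] by simp
  then show ?thesis using landau_o.small.cong[OF ev1] by simp
qed

lemma a0_eq_1:
  assumes "is_mean M" "homogeneous_mean M" "has_sym_expansion M a"
  shows "a 0 = 1"
proof -
  have "(\<lambda>v. M (1-v) (1+v) - a 0) \<in> o[FR](\<lambda>v. 1)"
    using exp_v[OF assms, of 0] by simp
  then have "((\<lambda>v. M (1-v) (1+v) - a 0) \<longlongrightarrow> 0) FR"
    using smalloD_tendsto by fastforce
  then have l1: "((\<lambda>v. M (1-v) (1+v)) \<longlongrightarrow> a 0) FR"
    using tendsto_add[OF _ tendsto_const[of "a 0"]] by fastforce
  have l2: "((\<lambda>v. M (1-v) (1+v)) \<longlongrightarrow> 1) FR"
  proof (rule tendsto_sandwich[of "\<lambda>v. 1 - v" _ _ "\<lambda>v. 1 + v"])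
    show "eventually (\<lambda>v. 1 - v \<le> M (1-v) (1+v)) FR" "eventually (\<lambda>v. M (1-v) (1+v) \<le> 1 + v) FR"
      using ev_small[OF zero_less_one] by (eventually_elim, use mean_bounds[OF assms(1)] in auto)+
    show "((\<lambda>v. 1 - v) \<longlongrightarrow> (1::real)) FR" "((\<lambda>v. 1 + v) \<longlongrightarrow> (1::real)) FR"
      by (auto intro!: tendsto_eq_intros)
  qed
  show ?thesis using tendsto_unique[OF _ l1 l2] by simp
qed

lemma uniform_exp:
  assumes "is_mean N" "symmetric_mean N" "homogeneous_mean N" "has_sym_expansion N a" "e > 0"
  shows "\<exists>d>0. \<forall>w. \<bar>w\<bar> < d \<longrightarrow> \<bar>N (1-w) (1+w) - (\<Sum>k\<le>K. a k * w^(2*k))\<bar> \<le> e * \<bar>w\<bar>^(2*K)"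
proof -
  have a0: "a 0 = 1" using a0_eq_1 assms by blast
  have "eventually (\<lambda>v. norm (N (1-v) (1+v) - (\<Sum>k\<le>K. a k * v^(2*k))) \<le> e * norm (v^(2*K))) FR"
    using landau_o.smallD[OF exp_v[OF assms(1,3,4)] assms(5)] by simp
  then obtain d where d0: "d > 0" and d1: "\<And>v. v > 0 \<Longrightarrow> v < d \<Longrightarrow> \<bar>N (1-v) (1+v) - (\<Sum>k\<le>K. a k * v^(2*k))\<bar> \<le> e * \<bar>v^(2*K)\<bar>"
    unfolding eventually_at_right_field by auto
  have d: "d > 0" "\<And>v. v > 0 \<Longrightarrow> v < d \<Longrightarrow> \<bar>N (1-v) (1+v) - (\<Sum>k\<le>K. a k * v^(2*k))\<bar> \<le> e * \<bar>v\<bar>^(2*K)"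
    using d0 d1 by (auto simp: power_abs)
  define d' where "d' = min d 1"
  have "\<forall>w. \<bar>w\<bar> < d' \<longrightarrow> \<bar>N (1-w) (1+w) - (\<Sum>k\<le>K. a k * w^(2*k))\<bar> \<le> e * \<bar>w\<bar>^(2*K)"
  proof (intro allI impI)
    fix w :: real assume w: "\<bar>w\<bar> < d'"
    consider "w = 0" | "w > 0" | "w < 0" by linarith
    then show "\<bar>N (1-w) (1+w) - (\<Sum>k\<le>K. a k * w^(2*k))\<bar> \<le> e * \<bar>w\<bar>^(2*K)"
    proof cases
      case 1
      have "(\<Sum>k\<le>K. a k * (0::real)^(2*k)) = a 0"
        by (subst sum.atMost_shift) auto
      moreover have "0 \<le> e * (0::real) ^ (2*K)" using assms(5) by (cases K) auto
      ultimately show ?thesis using 1 mean_11[OF assms(1)] a0 by simp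
    next
      case 2 then show ?thesis using d w by (auto simp: d'_def)
    next
      case 3
      have "N (1-w) (1+w) = N (1 - (-w)) (1 + (-w))"
        using assms(2) w 3 unfolding symmetric_mean_def d'_def by (auto simp: add.commute)
      moreover have "(\<Sum>k\<le>K. a k * w^(2*k)) = (\<Sum>k\<le>K. a k * (-w)^(2*k))"
        by (simp add: power_mult)
      ultimately show ?thesis using d(2)[of "-w"] w 3 by (auto simp: d'_def)
    qed
  qed
  moreover have "d' > 0" using d by (simp add: d'_def)
  ultimately show ?thesis by blast
qed


lemma compose_mean:
  fixes N :: "real \<Rightarrow> real \<Rightarrow> real" and a b :: "real \<Rightarrow> real"
  assumes mN: "is_mean N" "symmetric_mean N" "homogeneous_mean N" "has_sym_expansion N aN"
    and ev: "eventually (\<lambda>v. 1 - v \<le> a v \<and> a v \<le> 1 + v \<and> 1 - v \<le> b v \<and> b v \<le> 1 + v) FR"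
  shows "(\<lambda>v. N (a v) (b v) - (\<Sum>k\<le>K. aN k * (((b v - a v)/2)^(2*k) * ((a v + b v)/2) * inverse ((a v + b v)/2) ^ (2*k))))
          \<in> o[FR](\<lambda>v. v^(2*K))"
proof (rule landau_o.smallI)
  fix c :: real assume c: "c > 0"
  define e where "e = c / (2 * 4^K)"
  have e: "e > 0" using c by (simp add: e_def)
  obtain d where d: "d > 0" and dN: "\<And>w. \<bar>w\<bar> < d \<Longrightarrow> \<bar>N (1-w) (1+w) - (\<Sum>k\<le>K. aN k * w^(2*k))\<bar> \<le> e * \<bar>w\<bar>^(2*K)"
    using uniform_exp[OF mN e, of K] by blast
  have m: "min (d/2) (1/2) > 0" using d by simp
  show "eventually (\<lambda>v. norm (N (a v) (b v) - (\<Sum>k\<le>K. aN k * (((b v - a v)/2)^(2*k) * ((a v + b v)/2) * inverse ((a v + b v)/2) ^ (2*k)))) \<le> c * norm (v^(2*K))) FR"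
    using ev ev_small[OF m]
  proof eventually_elim
    case (elim v)
    define s where "s = a v + b v"
    define w where "w = (b v - a v) / s"
    have v: "0 < v" "v < d/2" "v < 1/2" using elim by auto
    have ab: "1 - v \<le> a v" "a v \<le> 1 + v" "1 - v \<le> b v" "b v \<le> 1 + v" using elim by auto
    have s1: "s \<ge> 1" "s \<le> 4" using ab v by (auto simp: s_def)
    have bad: "\<bar>b v - a v\<bar> \<le> 2 * v" using ab by auto
    have wle: "\<bar>w\<bar> \<le> 2 * v"
    proof -
      have "\<bar>w\<bar> = \<bar>b v - a v\<bar> / s" using s1 by (simp add: w_def abs_divide)
      also have "\<dots> \<le> \<bar>b v - a v\<bar>" using s1 by (simp add: divide_le_eq mult_le_cancel_left1 order_trans[OF _ mult_left_mono[of 1 s]])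
      also have "\<dots> \<le> 2 * v" by (rule bad)
      finally show ?thesis .
    qed
    have wd: "\<bar>w\<bar> < d" using wle v by linarith
    have hom: "N (a v) (b v) = (s/2) * N (1-w) (1+w)"
    proof -
      have p: "s/2 > 0" "1 - w > 0" "1 + w > 0"
        using s1 ab v by (auto simp: w_def field_simps s_def)
      have "N ((s/2) * (1-w)) ((s/2) * (1+w)) = (s/2) * N (1-w) (1+w)"
        using mN(3) p unfolding homogeneous_mean_def by blast
      moreover have "(s/2) * (1-w) = a v" "(s/2) * (1+w) = b v"
        using s1 by (auto simp: w_def s_def field_simps)
      ultimately show ?thesis by simp
    qed
    have sum: "(\<Sum>k\<le>K. aN k * (((b v - a v)/2)^(2*k) * ((a v + b v)/2) * inverse ((a v + b v)/2) ^ (2*k)))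
               = (s/2) * (\<Sum>k\<le>K. aN k * w^(2*k))"
      unfolding sum_distrib_left
    proof (intro sum.cong refl)
      fix k
      have "((b v - a v)/2)^(2*k) * inverse ((a v + b v)/2) ^ (2*k) = w^(2*k)"
        using s1 by (simp add: w_def s_def power_mult_distrib[symmetric] field_simps)
      then show "aN k * (((b v - a v)/2)^(2*k) * ((a v + b v)/2) * inverse ((a v + b v)/2) ^ (2*k)) = s / 2 * (aN k * w ^ (2 * k))"
        by (simp add: s_def algebra_simps)
    qed
    have "norm (N (a v) (b v) - (\<Sum>k\<le>K. aN k * (((b v - a v)/2)^(2*k) * ((a v + b v)/2) * inverse ((a v + b v)/2) ^ (2*k))))
          = \<bar>(s/2) * (N (1-w) (1+w) - (\<Sum>k\<le>K. aN k * w^(2*k)))\<bar>"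
      unfolding hom sum right_diff_distrib real_norm_def ..
    also have "\<dots> = (s/2) * \<bar>N (1-w) (1+w) - (\<Sum>k\<le>K. aN k * w^(2*k))\<bar>"
      using s1 by (simp add: abs_mult)
    also have "\<dots> \<le> 2 * (e * abs w ^ (2*K))"
      using dN[OF wd] s1 by (intro mult_mono) auto
    also have "\<dots> \<le> 2 * (e * (2 * v) ^ (2 * K))"
      using wle e by (intro mult_left_mono power_mono) auto
    also have "\<dots> = c * norm (v^(2*K))"
      using v c by (simp add: e_def power_mult_distrib power_mult abs_mult)
    finally show ?case .
  qed
qed


lemma pow_le_bigo: "n \<le> J \<Longrightarrow> (\<lambda>v::real. v^J) \<in> O[FR](\<lambda>v. v^n)"
proof -
  assume nJ: "n \<le> J"
  have "eventually (\<lambda>v::real. norm (v^J) \<le> 1 * norm (v^n)) FR"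
    using ev_small[OF zero_less_one]
  proof eventually_elim
    case (elim v) then show ?case using nJ by (simp add: power_decreasing abs_of_pos)
  qed
  then show ?thesis by (intro bigoI[where c=1]) auto
qed

lemma poly_small_coeff:
  assumes sm: "(\<lambda>v. poly p v) \<in> o[FR](\<lambda>v::real. v^J)"
  shows "n \<le> J \<Longrightarrow> coeff p n = 0"
proof (induction n rule: less_induct)
  case (less n)
  show ?case
  proof (rule ccontr)
    define c where "c = coeff p n"
    assume "coeff p n \<noteq> 0"
    then have c: "c \<noteq> 0" by (simp add: c_def)
    have nd: "n \<le> degree p" using c by (simp add: c_def le_degree)
    have rest: "(\<lambda>v. poly p v - c * v^n) \<in> o[FR](\<lambda>v::real. v^n)"
    proof -
      have "(\<lambda>v::real. \<Sum>i\<le>degree p. (coeff p i - (if i = n then c else 0)) * v^i) \<in> o[FR](\<lambda>v::real. v^n)"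
        by (rule sum_small) (use less in \<open>auto simp: c_def\<close>)
      moreover have "(\<lambda>v::real. \<Sum>i\<le>degree p. (coeff p i - (if i = n then c else 0)) * v^i) = (\<lambda>v. poly p v - c * v^n)"
      proof
        fix v :: real
        have "(\<Sum>i\<le>degree p. (coeff p i - (if i = n then c else 0)) * v^i)
              = (\<Sum>i\<le>degree p. coeff p i * v^i) - (\<Sum>i\<le>degree p. (if i = n then c * v^i else 0))"
          unfolding sum_subtractf[symmetric] by (intro sum.cong) (auto simp: algebra_simps)
        also have "(\<Sum>i\<le>degree p. (if i = n then c * v^i else 0)) = c * v^n"
          using nd by simp
        finally show "(\<Sum>i\<le>degree p. (coeff p i - (if i = n then c else 0)) * v^i) = poly p v - c * v^n"
          by (simp add: poly_altdef)
      qed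
      ultimately show ?thesis by simp
    qed
    have sm2: "(\<lambda>v. poly p v) \<in> o[FR](\<lambda>v::real. v^n)"
      using landau_o.small_big_trans[OF sm pow_le_bigo[OF less.prems]] .
    have "(\<lambda>v. poly p v - (poly p v - c * v^n)) \<in> o[FR](\<lambda>v::real. v^n)"
      using sm2 rest by (rule sum_in_smallo)
    then have "(\<lambda>v. c * v^n) \<in> o[FR](\<lambda>v::real. v^n)" by simp
    then have "(\<lambda>v. v^n) \<in> o[FR](\<lambda>v::real. v^n)" using c by simp
    then have "eventually (\<lambda>v::real. v^n = 0) FR" by (simp add: landau_o.small_refl_iff)
    then have "eventually (\<lambda>v::real. False) FR"
      using ev_pos by eventually_elim simp
    then show False by (simp add: trivial_limit_at_right_real)
  qed
qed

lemma approx_unique: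
  assumes "approx J f F" "approx J f G" "n \<le> J"
  shows "F$n = G$n"
proof -
  have "(\<lambda>v. (f v - poly (tp J F) v) - (f v - poly (tp J G) v)) \<in> o[FR](\<lambda>v. v^J)"
    using assms(1,2) unfolding approx_def by (rule sum_in_smallo)
  then have "(\<lambda>v. poly (tp J G - tp J F) v) \<in> o[FR](\<lambda>v. v^J)" by simp
  then have "coeff (tp J G - tp J F) n = 0" using assms(3) by (rule poly_small_coeff)
  then show ?thesis using assms(3) by (simp add: coeff_tp)
qed


definition Mf :: "(nat \<Rightarrow> real) \<Rightarrow> real fps" where
  "Mf a = Abs_fps (\<lambda>j. if even j then a (j div 2) else 0)"
definition HAf where "HAf a = fps_const (1/2) * (Mf a - 1 + fps_X)"
definition CAf where "CAf a = fps_const (1/2) * (1 - fps_X + Mf a)"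
definition HBf where "HBf a = fps_const (1/2) * (1 + fps_X - Mf a)"
definition CBf where "CBf a = fps_const (1/2) * (Mf a + 1 + fps_X)"
definition Tm :: "real fps \<Rightarrow> real fps \<Rightarrow> nat \<Rightarrow> real fps" where
  "Tm HH CC k = HH^(2*k) * CC * inverse CC^(2*k)"
definition Af where "Af aM aN m = (\<Sum>k\<le>m. fps_const (aN k) * Tm (HAf aM) (CAf aM) k)"
definition Bf where "Bf aM aN m = (\<Sum>k\<le>m. fps_const (aN k) * Tm (HBf aM) (CBf aM) k)"

lemma HA_eq: "aM 0 = 1 \<Longrightarrow> HAf aM = fps_const (1/2) * (fps_X * Abs_fps (gseq aM))"
  unfolding HAf_def
  by (intro arg_cong2[where f="(*)"] refl fps_ext)
     (auto simp: Mf_def gseq_def elim!: oddE evenE)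

lemma CA_eq: "aM 0 = 1 \<Longrightarrow> CAf aM = fps_const (1/2) * Abs_fps (hseq aM)"
  unfolding CAf_def
  by (intro arg_cong2[where f="(*)"] refl fps_ext)
     (auto simp: Mf_def hseq_def elim!: oddE evenE)

lemma Rf_Mf: "Rf (Mf a) = Mf a"
  by (rule fps_ext) (auto simp: Mf_def)

lemma Rf_HA: "Rf (HAf a) = - HBf a"
  by (simp add: HAf_def HBf_def Rf_mult Rf_add Rf_diff Rf_const Rf_one Rf_X Rf_Mf algebra_simps)

lemma Rf_CA: "Rf (CAf a) = CBf a"
  by (simp add: CAf_def CBf_def Rf_mult Rf_add Rf_diff Rf_const Rf_one Rf_X Rf_Mf algebra_simps)

lemma CA0: "aM 0 = 1 \<Longrightarrow> CAf aM $ 0 = 1"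
  by (simp add: CAf_def Mf_def)

lemma Bf_eq: "aM 0 = 1 \<Longrightarrow> Bf aM aN m = Rf (Af aM aN m)"
proof -
  assume a0: "aM 0 = 1"
  have "Rf (Tm (HAf aM) (CAf aM) k) = Tm (HBf aM) (CBf aM) k" for k
    unfolding Tm_def using CA0[of aM, OF a0]
    by (simp add: Rf_mult Rf_power Rf_inverse Rf_HA Rf_CA)
  then show ?thesis
    by (simp add: Af_def Bf_def Rf_sum Rf_mult Rf_const)
qed

lemma Tm_eq:
  assumes a0: "aM 0 = 1"
  shows "Tm (HAf aM) (CAf aM) k = fps_const (1/2) * (fps_X^(2*k) *
            (Abs_fps (gseq aM)^(2*k) * (Abs_fps (hseq aM) * inverse (Abs_fps (hseq aM))^(2*k))))"
proof -
  define G where "G = Abs_fps (gseq aM)"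
  define H where "H = Abs_fps (hseq aM)"
  have "Tm (HAf aM) (CAf aM) k = (fps_const (1/2) * (fps_X * G))^(2*k) * (fps_const (1/2) * H) *
          inverse (fps_const (1/2) * H)^(2*k)"
    unfolding Tm_def HA_eq[of aM, OF a0] CA_eq[of aM, OF a0] G_def H_def ..
  also have "\<dots> = fps_const ((1/2)^(2*k) * (1/2) * 2^(2*k)) * (fps_X^(2*k) * (G^(2*k) * (H * inverse H^(2*k))))"
    by (simp add: power_mult_distrib fps_inverse_mult fps_const_inverse algebra_simps)
  also have "(1/2::real)^(2*k) * (1/2) * 2^(2*k) = 1/2"
    by (simp add: power_one_over)
  finally show ?thesis by (simp add: G_def H_def)
qed

lemma gh0: "gseq aM 0 > 0" "hseq aM 0 > 0"
  by (simp_all add: gseq_def hseq_def)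

lemma Af_nth:
  assumes a0: "aM 0 = 1" and j: "j \<le> 2*m+1"
  shows "Af aM aN m $ j = (1/2) * (\<Sum>n=0..j div 2. aN n *
      (\<Sum>l=0..j-2*n. P l (2 * real n) (gseq aM) * P (j-2*n-l) (1 - 2 * real n) (hseq aM)))"
proof -
  define G where "G = Abs_fps (gseq aM)"
  define H where "H = Abs_fps (hseq aM)"
  define Y where "Y n i = (\<Sum>l=0..i. P l (2 * real n) (gseq aM) * P (i-l) (1 - 2 * real n) (hseq aM))" for n i
  have Y: "(G^(2*n) * (H * inverse H^(2*n)))$i = Y n i" for n i
    unfolding fps_mult_nth[of "G^(2*n)"] Y_def
    by (intro sum.cong refl) (simp only: G_def H_def P_pow[of "gseq aM", OF gh0(1)] P_ipow[of "hseq aM", OF gh0(2)])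
  have "Af aM aN m $ j = (\<Sum>k\<le>m. aN k * ((1/2) * (if j < 2*k then 0 else Y k (j - 2*k))))"
    unfolding Af_def fps_sum_nth fps_mult_left_const_nth Tm_eq[of aM, OF a0] G_def[symmetric] H_def[symmetric]
    by (intro sum.cong refl) (simp only: fps_X_power_mult_nth Y)
  also have "\<dots> = (\<Sum>k\<in>{0..j div 2}. aN k * ((1/2) * Y k (j - 2*k)))"
  proof (rule sum.mono_neutral_cong_right)
    show "{0..j div 2} \<subseteq> {..m}" using j by auto
  qed (auto)
  finally show ?thesis by (simp add: Y_def sum_distrib_left algebra_simps)
qed

lemma dseq_Af: "aM 0 = 1 \<Longrightarrow> i \<le> m \<Longrightarrow> dseq aM aN i = - Af aM aN m $ (2*i+1)"
  by (simp add: Af_nth dseq_def)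

lemma sseq_Af: "aM 0 = 1 \<Longrightarrow> i \<le> m \<Longrightarrow> sseq aM aN i = Af aM aN m $ (2*i)"
  by (simp add: Af_nth sseq_def)


definition Zf where "Zf aK D S m = (\<Sum>k\<le>m. fps_const (aK k) * Tm (fps_X * Ef D) (Ef S) k)"

lemma Tm_E:
  assumes "S$0 \<noteq> 0"
  shows "Tm (fps_X * Ef D) (Ef S) k = fps_X^(2*k) * Ef (D^(2*k) * (S * inverse S^(2*k)))"
  unfolding Tm_def using assms
  by (simp add: Ef_mult Ef_power Ef_inverse power_mult_distrib mult.assoc)

lemma Zf_nth:
  fixes d s :: "nat \<Rightarrow> real"
  assumes d0: "d 0 > 0" and s0: "s 0 > 0"
  shows "Zf aK (Abs_fps d) (Abs_fps s) m $ (2*m) =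
    (\<Sum>k\<le>m. aK k * (\<Sum>l=0..m-k. P l (2 * real k) d * P (m-k-l) (1 - 2 * real k) s))"
  unfolding Zf_def fps_sum_nth fps_mult_left_const_nth
proof (intro sum.cong refl)
  fix k assume k: "k \<in> {..m}"
  have "Tm (fps_X * Ef (Abs_fps d)) (Ef (Abs_fps s)) k $ (2*m) =
      (Abs_fps d^(2*k) * (Abs_fps s * inverse (Abs_fps s)^(2*k))) $ (m - k)"
  proof -
    define W where "W = Abs_fps d^(2*k) * (Abs_fps s * inverse (Abs_fps s)^(2*k))"
    have s0': "Abs_fps s $ 0 \<noteq> 0" using s0 by simp
    have e: "2*m - 2*k = 2*(m-k)" by simp
    have km: "\<not> 2*m < 2*k" using k by simp
    have "Tm (fps_X * Ef (Abs_fps d)) (Ef (Abs_fps s)) k $ (2*m) = (fps_X^(2*k) * Ef W) $ (2*m)"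
      unfolding Tm_E[OF s0'] W_def ..
    also have "\<dots> = Ef W $ (2*(m-k))" unfolding fps_X_power_mult_nth using km e by simp
    also have "\<dots> = W $ (m-k)" by simp
    finally show ?thesis unfolding W_def .
  qed
  also have "\<dots> = (\<Sum>l=0..m-k. P l (2 * real k) d * P (m-k-l) (1 - 2 * real k) s)"
    unfolding fps_mult_nth[of "Abs_fps d^(2*k)"]
    by (intro sum.cong refl) (simp only: P_pow[of d, OF d0] P_ipow[of s, OF s0])
  finally show "aK k * Tm (fps_X * Ef (Abs_fps d)) (Ef (Abs_fps s)) k $ (2*m) =
    aK k * (\<Sum>l=0..m-k. P l (2 * real k) d * P (m-k-l) (1 - 2 * real k) s)" by simp
qed

lemma HK_coeff:
  assumes a0: "aM 0 = 1" and n: "n \<le> 2*m"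
  shows "(fps_const (1/2) * (Rf (Af aM aN m) - Af aM aN m))$n = (fps_X * Ef (Abs_fps (dseq aM aN)))$n"
proof (cases "even n")
  case True then show ?thesis by (auto elim!: evenE)
next
  case False
  then obtain i where i: "n = 2*i+1" by (metis oddE)
  then have "i \<le> m" using n by simp
  then show ?thesis using i dseq_Af[of aM i m aN, OF a0] by simp
qed

lemma CK_coeff:
  assumes a0: "aM 0 = 1" and n: "n \<le> 2*m"
  shows "(fps_const (1/2) * (Af aM aN m + Rf (Af aM aN m)))$n = Ef (Abs_fps (sseq aM aN))$n"
proof (cases "even n")
  case True
  then obtain i where i: "n = 2*i" by (metis evenE)
  then have "i \<le> m" using n by simp
  then show ?thesis using i sseq_Af[of aM i m aN, OF a0] by simp
next
  case False then show ?thesis by simp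
qed


lemma d0: "aN 0 = 1 \<Longrightarrow> dseq aM aN 0 = 1/2"
  by (simp add: dseq_def gseq_def hseq_def One_nat_def)

lemma s0: "aN 0 = 1 \<Longrightarrow> sseq aM aN 0 = 1"
  by (simp add: sseq_def gseq_def hseq_def)

lemma approx_eq: "approx J f F \<Longrightarrow> (\<And>v. f v = g v) \<Longrightarrow> F = G \<Longrightarrow> approx J g G"
proof -
  assume "approx J f F" "\<And>v. f v = g v" "F = G"
  then have "f = g" by auto
  with \<open>approx J f F\<close> \<open>F = G\<close> show ?thesis by simp
qed

lemma approx_Tsum:
  assumes h: "approx J h HH" and c: "approx J c CC" and c0: "CC$0 \<noteq> 0"
  shows "approx J (\<lambda>v. \<Sum>k\<le>m. a k * (h v^(2*k) * c v * inverse (c v)^(2*k))) (\<Sum>k\<le>m. fps_const (a k) * Tm HH CC k)"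
  unfolding Tm_def
  by (intro approx_sum approx_cmult approx_mult approx_power approx_inverse h c c0 finite_atMost)

lemma Mf_poly: "poly (tp (2*m) (Mf a)) v = (\<Sum>k\<le>m. a k * v^(2*k))"
proof -
  have "poly (tp (2*m) (Mf a)) v = (\<Sum>j=0..2*m. Mf a $ j * v^j)"
    by (simp add: poly_tp atLeast0AtMost)
  also have "\<dots> = (\<Sum>k=0..m. Mf a $ (2*k) * v^(2*k)) + (\<Sum>k<m. Mf a $ (2*k+1) * v^(2*k+1))"
    by (rule sum_eo2)
  also have "\<dots> = (\<Sum>k\<le>m. a k * v^(2*k))"
    by (simp add: Mf_def atLeast0AtMost)
  finally show ?thesis .
qed

lemma main_coeff:
  fixes M N K :: "real \<Rightarrow> real \<Rightarrow> real" and aM aN aK :: "nat \<Rightarrow> real"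
  assumes mM: "is_mean M" "symmetric_mean M" "homogeneous_mean M" "has_sym_expansion M aM"
    and mN: "is_mean N" "symmetric_mean N" "homogeneous_mean N" "has_sym_expansion N aN"
    and mK: "is_mean K" "symmetric_mean K" "homogeneous_mean K" "has_sym_expansion K aK"
    and stab: "\<forall>s>0. \<forall>t>0. M s t = K (N s (M s t)) (N (M s t) t)"
  shows "aM m = (\<Sum>k\<le>m. aK k * (\<Sum>l=0..m-k. P l (2 * real k) (dseq aM aN) * P (m-k-l) (1 - 2 * real k) (sseq aM aN)))"
proof -
  have aM0: "aM 0 = 1" using a0_eq_1 mM(1,3,4) by blast
  have aN0: "aN 0 = 1" using a0_eq_1 mN(1,3,4) by blast
  define J where "J = 2*m"
  define mf where "mf v = M (1-v) (1+v)" for v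
  define A where "A v = N (1-v) (mf v)" for v
  define B where "B v = N (mf v) (1+v)" for v
  have ev01: "eventually (\<lambda>v::real. 0 < v \<and> v < 1) FR" by (rule ev_small) simp
  have mfb: "eventually (\<lambda>v. 1 - v \<le> mf v \<and> mf v \<le> 1 + v) FR"
    using ev01 by eventually_elim (use mean_bounds[OF mM(1)] in \<open>auto simp: mf_def\<close>)
  have S1: "approx J mf (Mf aM)"
    using exp_v[OF mM(1,3,4), of m] unfolding approx_def J_def Mf_poly mf_def .
  have HA: "approx J (\<lambda>v. (mf v - (1 - v))/2) (HAf aM)"
    by (rule approx_eq[OF approx_cmult[OF approx_add[OF approx_diff[OF S1 approx_const] approx_X]], of "1/2" 1])
       (auto simp: HAf_def)
  have CA: "approx J (\<lambda>v. ((1 - v) + mf v)/2) (CAf aM)"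
    by (rule approx_eq[OF approx_cmult[OF approx_add[OF approx_diff[OF approx_const approx_X] S1]], of "1/2" 1])
       (auto simp: CAf_def)
  have HB: "approx J (\<lambda>v. ((1 + v) - mf v)/2) (HBf aM)"
    by (rule approx_eq[OF approx_cmult[OF approx_diff[OF approx_add[OF approx_const approx_X] S1]], of "1/2" 1])
       (auto simp: HBf_def)
  have CB: "approx J (\<lambda>v. (mf v + (1 + v))/2) (CBf aM)"
    by (rule approx_eq[OF approx_cmult[OF approx_add[OF approx_add[OF S1 approx_const] approx_X]], of "1/2" 1])
       (auto simp: CBf_def)
  have CB0: "CBf aM $ 0 \<noteq> 0" using aM0 by (simp add: CBf_def Mf_def)
  have CA0': "CAf aM $ 0 \<noteq> 0" using CA0[of aM, OF aM0] by simp
  have appA: "approx J A (Af aM aN m)"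
  proof (rule approx_small[OF approx_Tsum[OF HA CA CA0'], of _ aN m, folded Af_def])
    have ev: "eventually (\<lambda>v. 1 - v \<le> 1 - v \<and> 1 - v \<le> 1 + v \<and> 1 - v \<le> mf v \<and> mf v \<le> 1 + v) FR"
      using mfb ev01 by eventually_elim auto
    show "(\<lambda>v. A v - (\<Sum>k\<le>m. aN k * (((mf v - (1 - v))/2)^(2*k) * (((1 - v) + mf v)/2) * inverse (((1 - v) + mf v)/2)^(2*k)))) \<in> o[FR](\<lambda>v. v^J)"
      using compose_mean[OF mN ev, of m] unfolding A_def J_def .
  qed
  have appB: "approx J B (Bf aM aN m)"
  proof (rule approx_small[OF approx_Tsum[OF HB CB CB0], of _ aN m, folded Bf_def])
    have ev: "eventually (\<lambda>v. 1 - v \<le> mf v \<and> mf v \<le> 1 + v \<and> 1 - v \<le> 1 + v \<and> 1 + v \<le> 1 + v) FR"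
      using mfb ev01 by eventually_elim auto
    show "(\<lambda>v. B v - (\<Sum>k\<le>m. aN k * ((((1 + v) - mf v)/2)^(2*k) * ((mf v + (1 + v))/2) * inverse ((mf v + (1 + v))/2)^(2*k)))) \<in> o[FR](\<lambda>v. v^J)"
      using compose_mean[OF mN ev, of m] unfolding B_def J_def .
  qed
  have ABb: "eventually (\<lambda>v. 1 - v \<le> A v \<and> A v \<le> 1 + v \<and> 1 - v \<le> B v \<and> B v \<le> 1 + v) FR"
    using mfb ev01
  proof eventually_elim
    case (elim v)
    have p: "1 - v > 0" "mf v > 0" "1 + v > 0" using elim by auto
    have "min (1-v) (mf v) \<le> A v \<and> A v \<le> max (1-v) (mf v)"
      using mN(1) p unfolding is_mean_def A_def by blast
    moreover have "min (mf v) (1+v) \<le> B v \<and> B v \<le> max (mf v) (1+v)"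
      using mN(1) p unfolding is_mean_def B_def by blast
    ultimately show ?case using elim by auto
  qed
  define D where "D = Abs_fps (dseq aM aN)"
  define S where "S = Abs_fps (sseq aM aN)"
  have HK: "approx J (\<lambda>v. (B v - A v)/2) (fps_X * Ef D)"
  proof (rule approx_cong_fps)
    show "approx J (\<lambda>v. (B v - A v)/2) (fps_const (1/2) * (Rf (Af aM aN m) - Af aM aN m))"
      by (rule approx_eq[OF approx_cmult[OF approx_diff[OF appB appA]], of "1/2"])
         (auto simp: Bf_eq[of aM, OF aM0])
    show "\<And>n. n \<le> J \<Longrightarrow> (fps_const (1/2) * (Rf (Af aM aN m) - Af aM aN m)) $ n = (fps_X * Ef D) $ n"
      unfolding D_def J_def by (rule HK_coeff[of aM _ m aN, OF aM0])
  qed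
  have CK: "approx J (\<lambda>v. (A v + B v)/2) (Ef S)"
  proof (rule approx_cong_fps)
    show "approx J (\<lambda>v. (A v + B v)/2) (fps_const (1/2) * (Af aM aN m + Rf (Af aM aN m)))"
      by (rule approx_eq[OF approx_cmult[OF approx_add[OF appA appB]], of "1/2"])
         (auto simp: Bf_eq[of aM, OF aM0])
    show "\<And>n. n \<le> J \<Longrightarrow> (fps_const (1/2) * (Af aM aN m + Rf (Af aM aN m))) $ n = Ef S $ n"
      unfolding S_def J_def by (rule CK_coeff[of aM _ m aN, OF aM0])
  qed
  have ES0: "Ef S $ 0 \<noteq> 0" using s0[of aN aM, OF aN0] by (simp add: S_def)
  have appM: "approx J mf (Zf aK D S m)"
  proof (rule approx_small[OF approx_Tsum[OF HK CK ES0], of _ aK m, folded Zf_def])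
    have ev: "eventually (\<lambda>v. mf v = K (A v) (B v)) FR"
      using ev01 by eventually_elim (use stab in \<open>auto simp: mf_def A_def B_def\<close>)
    have sm: "(\<lambda>v. K (A v) (B v) - (\<Sum>k\<le>m. aK k * (((B v - A v)/2)^(2*k) * ((A v + B v)/2) * inverse ((A v + B v)/2)^(2*k)))) \<in> o[FR](\<lambda>v. v^J)"
      using compose_mean[OF mK ABb, of m] unfolding J_def .
    have ev2: "eventually (\<lambda>v. K (A v) (B v) - (\<Sum>k\<le>m. aK k * (((B v - A v)/2)^(2*k) * ((A v + B v)/2) * inverse ((A v + B v)/2)^(2*k)))
       = mf v - (\<Sum>k\<le>m. aK k * (((B v - A v)/2)^(2*k) * ((A v + B v)/2) * inverse ((A v + B v)/2)^(2*k)))) FR"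
      using ev by eventually_elim simp
    show "(\<lambda>v. mf v - (\<Sum>k\<le>m. aK k * (((B v - A v)/2)^(2*k) * ((A v + B v)/2) * inverse ((A v + B v)/2)^(2*k)))) \<in> o[FR](\<lambda>v. v^J)"
      using landau_o.small.in_cong[OF ev2] sm by blast
  qed
  have "Mf aM $ (2*m) = Zf aK D S m $ (2*m)"
    using approx_unique[OF S1 appM] by (simp add: J_def)
  moreover have "Mf aM $ (2*m) = aM m" by (simp add: Mf_def)
  moreover have "Zf aK D S m $ (2*m) = (\<Sum>k\<le>m. aK k * (\<Sum>l=0..m-k. P l (2 * real k) (dseq aM aN) * P (m-k-l) (1 - 2 * real k) (sseq aM aN)))"
    unfolding D_def S_def by (rule Zf_nth) (simp_all add: d0[of aN aM, OF aN0] s0[of aN aM, OF aN0])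
  ultimately show ?thesis by simp
qed

lemma P0_pow: "b 0 > 0 \<Longrightarrow> P 0 (2 * real k) b = b 0 ^ (2*k)"
  using P_pow[of b 0 k] by (simp add: fps_nth_power_0)

lemma P0_ipow: "b 0 > 0 \<Longrightarrow> P 0 (1 - 2 * real k) b = b 0 * inverse (b 0) ^ (2*k)"
  using P_ipow[of b 0 k] by (simp add: fps_nth_power_0)

lemma P_zero_exp: "b 0 > 0 \<Longrightarrow> P l (2 * real (0::nat)) b = (if l = 0 then 1 else 0)"
  using P_pow[of b l 0] by simp

lemma P_one_exp: "b 0 > 0 \<Longrightarrow> P l (1 - 2 * real (0::nat)) b = b l"
  using P_ipow[of b l 0] by simp

lemma lin: "(x::real) = 1/2 * (x + a) + b \<Longrightarrow> x = a + 2 * b" by (simp add: field_simps)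

theorem theorem3p6:
  fixes M N K :: "real \<Rightarrow> real \<Rightarrow> real" and aM aN aK :: "nat \<Rightarrow> real"
  assumes "is_mean M" "symmetric_mean M" "homogeneous_mean M"
    and "is_mean N" "symmetric_mean N" "homogeneous_mean N"
    and "is_mean K" "symmetric_mean K" "homogeneous_mean K"
    and "has_sym_expansion M aM" "has_sym_expansion N aN" "has_sym_expansion K aK"
    and "stable_mean K" "stable_mean N"
    and "stabilized K N M"
  shows "aM 0 = 1 \<and>
    (\<forall>m\<ge>1. aM m =
       (\<Sum>n=1..m. aN n * (\<Sum>k=0..2*m-2*n. P k (2 * real n) (gseq aM) *
                                          P (2*m-2*n-k) (1 - 2 * real n) (hseq aM)))
       + 2 * (\<Sum>n=1..m. aK n * (\<Sum>k=0..m-n. P k (2 * real n) (dseq aM aN) *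
                                          P (m-n-k) (1 - 2 * real n) (sseq aM aN)))) \<and>
    aM 1 = (aK 1 + aN 1) / 2"
proof -
  have stab: "\<forall>s>0. \<forall>t>0. M s t = K (N s (M s t)) (N (M s t) t)"
    using assms(15) unfolding stabilized_def by blast
  have aM0: "aM 0 = 1" using a0_eq_1 assms(1,3,10) by blast
  have aN0: "aN 0 = 1" using a0_eq_1 assms(4,6,11) by blast
  have aK0: "aK 0 = 1" using a0_eq_1 assms(7,9,12) by blast
  have dpos: "dseq aM aN 0 > 0" using d0[of aN aM, OF aN0] by simp
  have spos: "sseq aM aN 0 > 0" using s0[of aN aM, OF aN0] by simp
  have gen: "aM m =
       (\<Sum>n=1..m. aN n * (\<Sum>k=0..2*m-2*n. P k (2 * real n) (gseq aM) *
                                          P (2*m-2*n-k) (1 - 2 * real n) (hseq aM)))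
       + 2 * (\<Sum>n=1..m. aK n * (\<Sum>k=0..m-n. P k (2 * real n) (dseq aM aN) *
                                          P (m-n-k) (1 - 2 * real n) (sseq aM aN)))" if m: "m \<ge> 1" for m
  proof -
    define T where "T n = (\<Sum>k=0..m-n. P k (2 * real n) (dseq aM aN) * P (m-n-k) (1 - 2 * real n) (sseq aM aN))" for n
    define U where "U n = (\<Sum>k=0..2*m-2*n. P k (2 * real n) (gseq aM) * P (2*m-2*n-k) (1 - 2 * real n) (hseq aM))" for n
    have mc: "aM m = (\<Sum>k\<le>m. aK k * T k)"
      unfolding T_def by (rule main_coeff[OF assms(1-3,10) assms(4-6,11) assms(7-9,12) stab])
    have T0: "T 0 = sseq aM aN m"
    proof -
      have "T 0 = (\<Sum>k=0..m. (if k = 0 then 1 else 0) * P (m-k) (1 - 2 * real (0::nat)) (sseq aM aN))"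
        unfolding T_def using P_zero_exp[of "dseq aM aN", OF dpos] by simp
      also have "\<dots> = P m (1 - 2 * real (0::nat)) (sseq aM aN)"
        by (simp add: sum.atLeast_Suc_atMost[of 0 m])
      also have "\<dots> = sseq aM aN m" using P_one_exp[of "sseq aM aN", OF spos] by simp
      finally show ?thesis .
    qed
    have U0: "U 0 = aM m"
    proof -
      have "U 0 = (\<Sum>k=0..2*m. (if k = 0 then 1 else 0) * P (2*m-k) (1 - 2 * real (0::nat)) (hseq aM))"
        unfolding U_def using P_zero_exp[of "gseq aM", OF gh0(1)] by simp
      also have "\<dots> = P (2*m) (1 - 2 * real (0::nat)) (hseq aM)"
        by (simp add: sum.atLeast_Suc_atMost[of 0 "2*m"])
      also have "\<dots> = hseq aM (2*m)" using P_one_exp[of "hseq aM", OF gh0(2)] by simp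
      also have "\<dots> = aM m" using m by (simp add: hseq_def)
      finally show ?thesis .
    qed
    have ss: "sseq aM aN m = (1/2) * (aN 0 * U 0 + (\<Sum>n=1..m. aN n * U n))"
      unfolding sseq_def U_def by (simp add: sum.atLeast_Suc_atMost[of 0 m])
    have "aM m = aK 0 * T 0 + (\<Sum>k=1..m. aK k * T k)"
      unfolding mc by (simp add: atLeast0AtMost[symmetric] sum.atLeast_Suc_atMost[of 0 m])
    then have "aM m = (1/2) * (aM m + (\<Sum>n=1..m. aN n * U n)) + (\<Sum>k=1..m. aK k * T k)"
      using aK0 aN0 T0 U0 ss by simp
    then have "aM m = (\<Sum>n=1..m. aN n * U n) + 2 * (\<Sum>k=1..m. aK k * T k)"
      by (rule lin)
    then show ?thesis unfolding T_def U_def .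
  qed
  have one: "aM 1 = (aK 1 + aN 1) / 2"
  proof -
    have "aM 1 = aN 1 * (P 0 (2 * real (1::nat)) (gseq aM) * P 0 (1 - 2 * real (1::nat)) (hseq aM))
       + 2 * (aK 1 * (P 0 (2 * real (1::nat)) (dseq aM aN) * P 0 (1 - 2 * real (1::nat)) (sseq aM aN)))"
      using gen[of 1] by simp
    also have "\<dots> = (aK 1 + aN 1) / 2"
      by (simp add: P0_pow[of "gseq aM", OF gh0(1)] P0_ipow[of "hseq aM", OF gh0(2)] P0_pow[of "dseq aM aN", OF dpos] P0_ipow[of "sseq aM aN", OF spos]
          d0[of aN aM, OF aN0] s0[of aN aM, OF aN0] gseq_def hseq_def power2_eq_square)
    finally show ?thesis .
  qed
  show ?thesis using aM0 gen one by blast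
qed


end
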